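(* Let $N\ge1$, $W,N_0,P_A,P^{max}>0$ and for $i=1,\dots,N$ let $D_i,\zeta_i,h_i,g_i>0$. Consider the problem: minimize $\tau_0+\sum_{i=1}^N\tau_{S_i}$ over $\tau_0,\tau_{S_i},P_{S_i}\ge0$ subject to, for all $i$, $P_{S_i}\tau_{S_i}\le\zeta_iP_Ah_i\tau_0$, $\tau_{S_i}W\log_2\left(1+\frac{P_{S_i}g_i}{WN_0}\right)\ge D_i$, and $P_{S_i}\le P^{max}$. For each $i$ let $\ddot\tau_0^i=\frac{P^{max}}{\zeta_iP_Ah_i}\cdot\frac{D_i}{W\log_2(1+P^{max}g_i/(WN_0))}$ (the harvesting time for which, with source $i$ alone, all three constraints hold with equality), and let $\ddot\tau_0^{max}=\max_{i=1,\dots,N}\ddot\tau_0^i$. Then $\ddot\tau_0^{max}$ is an upper bound on the optimal value of $\tau_0$ in this problem.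
   Context: Multiple source wireless powered network: all sources harvest energy from an AP of power $P_A$ during a common time $\tau_0$ (source $i$ harvests $\zeta_iP_Ah_i\tau_0$), then each source $i$ transmits $D_i$ bits in its own slot of length $\tau_{S_i}$ with power $P_{S_i}\le P^{max}$ over an AWGN channel of gain $g_i$. *)

theory Defs
  imports Complex_Main
begin

definition feasible ::
  "nat \<Rightarrow> real \<Rightarrow> real \<Rightarrow> real \<Rightarrow> real \<Rightarrow> (nat \<Rightarrow> real) \<Rightarrow> (nat \<Rightarrow> real)
   \<Rightarrow> (nat \<Rightarrow> real) \<Rightarrow> (nat \<Rightarrow> real) \<Rightarrow> real \<Rightarrow> (nat \<Rightarrow> real) \<Rightarrow> (nat \<Rightarrow> real) \<Rightarrow> bool" where
  "feasible N W N0 PA Pmax D zeta h g tau0 tauS PS \<longleftrightarrow>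
     tau0 \<ge> 0 \<and>
     (\<forall>i\<in>{1..N}. tauS i \<ge> 0 \<and> PS i \<ge> 0 \<and>
        PS i * tauS i \<le> zeta i * PA * h i * tau0 \<and>
        tauS i * W * log 2 (1 + PS i * g i / (W * N0)) \<ge> D i \<and>
        PS i \<le> Pmax)"

definition objective :: "nat \<Rightarrow> real \<Rightarrow> (nat \<Rightarrow> real) \<Rightarrow> real" where
  "objective N tau0 tauS = tau0 + (\<Sum>i=1..N. tauS i)"

definition tau0_ddot :: "real \<Rightarrow> real \<Rightarrow> real \<Rightarrow> real \<Rightarrow> (nat \<Rightarrow> real) \<Rightarrow> (nat \<Rightarrow> real)
   \<Rightarrow> (nat \<Rightarrow> real) \<Rightarrow> (nat \<Rightarrow> real) \<Rightarrow> nat \<Rightarrow> real" where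
  "tau0_ddot W N0 PA Pmax D zeta h g i =
     Pmax / (zeta i * PA * h i) * (D i / (W * log 2 (1 + Pmax * g i / (W * N0))))"

definition tau0_ddot_max :: "nat \<Rightarrow> real \<Rightarrow> real \<Rightarrow> real \<Rightarrow> real \<Rightarrow> (nat \<Rightarrow> real) \<Rightarrow> (nat \<Rightarrow> real)
   \<Rightarrow> (nat \<Rightarrow> real) \<Rightarrow> (nat \<Rightarrow> real) \<Rightarrow> real" where
  "tau0_ddot_max N W N0 PA Pmax D zeta h g =
     Max ((tau0_ddot W N0 PA Pmax D zeta h g) ` {1..N})"

end

theory Submission
  imports Defs
begin

theorem lemma5:
  fixes N :: nat and W N0 PA Pmax :: real and D zeta h g :: "nat \<Rightarrow> real"
    and tau0 :: real and tauS PS :: "nat \<Rightarrow> real"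
  assumes "N \<ge> 1" and "W > 0" and "N0 > 0" and "PA > 0" and "Pmax > 0"
    and "\<forall>i\<in>{1..N}. D i > 0 \<and> zeta i > 0 \<and> h i > 0 \<and> g i > 0"
    and opt_feas: "feasible N W N0 PA Pmax D zeta h g tau0 tauS PS"
    and opt_min: "\<forall>t0 tS P. feasible N W N0 PA Pmax D zeta h g t0 tS P \<longrightarrow>
                     objective N tau0 tauS \<le> objective N t0 tS"
  shows "tau0 \<le> tau0_ddot_max N W N0 PA Pmax D zeta h g"
proof (rule ccontr)
  assume neg: "\<not> ?thesis"
  define M where "M = tau0_ddot_max N W N0 PA Pmax D zeta h g"
  define L where "L i = log 2 (1 + Pmax * g i / (W * N0))" for i
  define T where "T i = D i / (W * L i)" for i
  have pos: "D i > 0" "zeta i > 0" "h i > 0" "g i > 0" if "i \<in> {1..N}" for i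
    using assms(6) that by auto
  have Lpos: "L i > 0" if "i \<in> {1..N}" for i
  proof -
    have "Pmax * g i / (W * N0) > 0" using pos[OF that] assms by simp
    then show ?thesis unfolding L_def by simp
  qed
  have Mge: "tau0_ddot W N0 PA Pmax D zeta h g i \<le> M" if "i \<in> {1..N}" for i
    unfolding M_def tau0_ddot_max_def using that by (intro Max_ge) auto
  have ddot_eq: "tau0_ddot W N0 PA Pmax D zeta h g i = Pmax * T i / (zeta i * PA * h i)" for i
    unfolding tau0_ddot_def T_def L_def by simp
  have Tle: "T i \<le> tauS i" if i: "i \<in> {1..N}" for i
  proof -
    have f: "tauS i \<ge> 0" "PS i \<ge> 0" "PS i \<le> Pmax"
      "tauS i * W * log 2 (1 + PS i * g i / (W * N0)) \<ge> D i"
      using opt_feas i unfolding feasible_def by auto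
    have a: "1 + PS i * g i / (W * N0) > 0"
      using f pos[OF i] assms by (simp add: add_pos_nonneg)
    have "PS i * g i / (W * N0) \<le> Pmax * g i / (W * N0)"
      using f pos[OF i] assms by (intro divide_right_mono mult_right_mono) auto
    then have "log 2 (1 + PS i * g i / (W * N0)) \<le> L i"
      unfolding L_def using a by simp
    then have "tauS i * W * log 2 (1 + PS i * g i / (W * N0)) \<le> tauS i * W * L i"
      using f assms by (intro mult_left_mono) auto
    with f have "D i \<le> tauS i * (W * L i)" by (simp add: mult.assoc)
    then show ?thesis unfolding T_def using Lpos[OF i] assms
      by (simp add: pos_divide_le_eq mult.commute)
  qed
  have M0: "M \<ge> 0"
  proof -
    have "1 \<in> {1..N}" using assms by simp
    have "T 1 > 0" unfolding T_def using Lpos[OF \<open>1 \<in> {1..N}\<close>] pos[OF \<open>1 \<in> {1..N}\<close>] assms by simp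
    then have "tau0_ddot W N0 PA Pmax D zeta h g 1 > 0"
      unfolding ddot_eq using pos[OF \<open>1 \<in> {1..N}\<close>] assms by simp
    then show ?thesis using Mge[OF \<open>1 \<in> {1..N}\<close>] by simp
  qed
  have feas: "feasible N W N0 PA Pmax D zeta h g M T (\<lambda>_. Pmax)"
    unfolding feasible_def
  proof (intro conjI ballI M0)
    fix i assume i: "i \<in> {1..N}"
    show "T i \<ge> 0" unfolding T_def using Lpos[OF i] pos[OF i] assms by simp
    show "Pmax \<ge> 0" "Pmax \<le> Pmax" using assms by auto
    have c: "zeta i * PA * h i > 0" using pos[OF i] assms by simp
    have "Pmax * T i / (zeta i * PA * h i) \<le> M" using Mge[OF i] ddot_eq by simp
    then show "Pmax * T i \<le> zeta i * PA * h i * M" using c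
      by (simp add: pos_divide_le_eq mult.commute)
    show "T i * W * log 2 (1 + Pmax * g i / (W * N0)) \<ge> D i"
      unfolding T_def using Lpos[OF i] assms by (simp add: L_def[symmetric])
  qed
  have "objective N tau0 tauS \<le> objective N M T" using opt_min feas by blast
  moreover have "(\<Sum>i=1..N. T i) \<le> (\<Sum>i=1..N. tauS i)" by (intro sum_mono Tle)
  ultimately show False using neg unfolding objective_def M_def by simp
qed

end
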